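(* Let $k$ be an algebraically closed field of characteristic $2$, $G=\mathrm{GL}(n,k)$ acting by conjugation on $\mathfrak g=\mathfrak{gl}(n,k)$, and $\mathcal N_1=\{x\in\mathfrak g:x^2=0\}$. Let $i$ be an integer with $n-2i\ge 2$, $i\ge 0$, and let $$e_i=\begin{pmatrix}0&0&I_i\\0&0&0\\0&0&0\end{pmatrix}$$ with diagonal blocks of sizes $i$, $n-2i$, $i$. Every element of the centralizer $\mathfrak z_{\mathfrak g}(e_i)$ has the block form $$x=\begin{pmatrix}A&B&C\\0&E&F\\0&0&A\end{pmatrix},\quad A,C\in\mathrm{Mat}_{i\times i},\ E\in\mathrm{Mat}_{(n-2i)\times(n-2i)},\ B\in\mathrm{Mat}_{i\times(n-2i)},\ F\in\mathrm{Mat}_{(n-2i)\times i}.$$ Let $V$ be an irreducible component of $\mathfrak z_{\mathfrak g}(e_i)\cap\mathcal N_1$, and suppose that some $x\in V$ has $E\neq 0$. Then $V$ is not contained in $\overline{G\cdot e_i}$.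
   Context: $\overline{G\cdot e_i}$ denotes the Zariski closure of the conjugacy class of $e_i$. *)

theory Defs
  imports "HOL-Computational_Algebra.Polynomial"
begin

text \<open>n x n matrices over 'k are represented as functions nat => nat => 'k
  that vanish outside the index range {0..<n} x {0..<n}.\<close>

definition mats :: "nat \<Rightarrow> (nat \<Rightarrow> nat \<Rightarrow> 'k::field) set" where
  "mats n = {X. \<forall>a b. (n \<le> a \<or> n \<le> b) \<longrightarrow> X a b = 0}"

definition mmul :: "nat \<Rightarrow> (nat \<Rightarrow> nat \<Rightarrow> 'k::field) \<Rightarrow> (nat \<Rightarrow> nat \<Rightarrow> 'k) \<Rightarrow> (nat \<Rightarrow> nat \<Rightarrow> 'k)" where
  "mmul n X Y = (\<lambda>a b. if a < n \<and> b < n then (\<Sum>c<n. X a c * Y c b) else 0)"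

definition midt :: "nat \<Rightarrow> (nat \<Rightarrow> nat \<Rightarrow> 'k::field)" where
  "midt n = (\<lambda>a b. if a < n \<and> b < n \<and> a = b then 1 else 0)"

inductive_set polyfuns :: "nat \<Rightarrow> ((nat \<Rightarrow> nat \<Rightarrow> 'k::field) \<Rightarrow> 'k) set" for n where
  const: "(\<lambda>X. c) \<in> polyfuns n"
| coord: "a < n \<Longrightarrow> b < n \<Longrightarrow> (\<lambda>X. X a b) \<in> polyfuns n"
| add: "f \<in> polyfuns n \<Longrightarrow> g \<in> polyfuns n \<Longrightarrow> (\<lambda>X. f X + g X) \<in> polyfuns n"
| mult: "f \<in> polyfuns n \<Longrightarrow> g \<in> polyfuns n \<Longrightarrow> (\<lambda>X. f X * g X) \<in> polyfuns n"

definition zclosed :: "nat \<Rightarrow> (nat \<Rightarrow> nat \<Rightarrow> 'k::field) set \<Rightarrow> bool" where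
  "zclosed n C \<longleftrightarrow> (\<exists>F \<subseteq> polyfuns n. C = {X \<in> mats n. \<forall>f\<in>F. f X = 0})"

definition zclosure :: "nat \<Rightarrow> (nat \<Rightarrow> nat \<Rightarrow> 'k::field) set \<Rightarrow> (nat \<Rightarrow> nat \<Rightarrow> 'k) set" where
  "zclosure n S = \<Inter>{C. zclosed n C \<and> S \<subseteq> C}"

definition zirreducible :: "nat \<Rightarrow> (nat \<Rightarrow> nat \<Rightarrow> 'k::field) set \<Rightarrow> bool" where
  "zirreducible n Z \<longleftrightarrow> Z \<noteq> {} \<and> Z \<subseteq> mats n \<and>
     (\<forall>C1 C2. zclosed n C1 \<and> zclosed n C2 \<and> Z \<subseteq> C1 \<union> C2 \<longrightarrow> Z \<subseteq> C1 \<or> Z \<subseteq> C2)"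

definition irr_component :: "nat \<Rightarrow> (nat \<Rightarrow> nat \<Rightarrow> 'k::field) set \<Rightarrow> (nat \<Rightarrow> nat \<Rightarrow> 'k) set \<Rightarrow> bool" where
  "irr_component n Y V \<longleftrightarrow> V \<subseteq> Y \<and> zirreducible n V \<and>
     (\<forall>W. V \<subseteq> W \<and> W \<subseteq> Y \<and> zirreducible n W \<longrightarrow> W = V)"

definition conj_orbit :: "nat \<Rightarrow> (nat \<Rightarrow> nat \<Rightarrow> 'k::field) \<Rightarrow> (nat \<Rightarrow> nat \<Rightarrow> 'k) set" where
  "conj_orbit n e = {mmul n (mmul n P e) Q | P Q.
      P \<in> mats n \<and> Q \<in> mats n \<and> mmul n P Q = midt n \<and> mmul n Q P = midt n}"

definition centralizer :: "nat \<Rightarrow> (nat \<Rightarrow> nat \<Rightarrow> 'k::field) \<Rightarrow> (nat \<Rightarrow> nat \<Rightarrow> 'k) set" where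
  "centralizer n e = {X \<in> mats n. mmul n X e = mmul n e X}"

definition sqzero :: "nat \<Rightarrow> (nat \<Rightarrow> nat \<Rightarrow> 'k::field) set" where
  "sqzero n = {X \<in> mats n. mmul n X X = (\<lambda>a b. 0)}"

text \<open>e_i: identity block I_i in rows 0..i-1, columns n-i..n-1 (0-based).\<close>
definition e_mat :: "nat \<Rightarrow> nat \<Rightarrow> (nat \<Rightarrow> nat \<Rightarrow> 'k::field)" where
  "e_mat n i = (\<lambda>a b. if a < i \<and> b = a + (n - i) then 1 else 0)"

definition E_block_nonzero :: "nat \<Rightarrow> nat \<Rightarrow> (nat \<Rightarrow> nat \<Rightarrow> 'k::field) \<Rightarrow> bool" where
  "E_block_nonzero n i X \<longleftrightarrow> (\<exists>a b. i \<le> a \<and> a < n - i \<and> i \<le> b \<and> b < n - i \<and> X a b \<noteq> 0)"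

end

theory Submission
  imports Defs "Jordan_Normal_Form.Determinant" "Jordan_Normal_Form.Char_Poly"
begin


lemma infinite_alg_closed: "infinite (UNIV :: 'k::alg_closed_field set)"
proof
  assume fin: "finite (UNIV :: 'k set)"
  define q :: "'k poly" where "q = (\<Prod>a\<in>UNIV. [:-a, 1:])"
  define p where "p = q + 1"
  have dq: "degree q = card (UNIV :: 'k set)" unfolding q_def
    by (subst degree_prod_eq_sum_degree) auto
  have "card (UNIV :: 'k set) > 0" using fin by (simp add: finite_UNIV_card_ge_0)
  hence dp: "degree p > 0" unfolding p_def using dq
    by (simp add: degree_add_eq_left)
  then obtain x where "poly p x = 0" using alg_closed_imp_poly_has_root by blast
  moreover have "poly q x = 0" unfolding q_def poly_prod using fin
    by (rule prod_zero) (auto intro!: bexI[of _ x])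
  ultimately show False unfolding p_def by simp
qed

lemma polyfuns_sum:
  assumes "finite A" "\<And>j. j \<in> A \<Longrightarrow> g j \<in> polyfuns n"
  shows "(\<lambda>X. \<Sum>j\<in>A. g j X) \<in> polyfuns n"
  using assms
proof (induction A rule: finite_induct)
  case empty
  then show ?case using polyfuns.const[of 0] by simp
next
  case (insert x F)
  then show ?case using polyfuns.add[of "g x" n "\<lambda>X. \<Sum>j\<in>F. g j X"] by simp
qed

lemma polyfuns_prod:
  assumes "finite A" "\<And>j. j \<in> A \<Longrightarrow> g j \<in> polyfuns n"
  shows "(\<lambda>X. \<Prod>j\<in>A. g j X) \<in> polyfuns n"
  using assms
proof (induction A rule: finite_induct)
  case empty
  then show ?case using polyfuns.const[of 1] by simp
next
  case (insert x F)
  then show ?case using polyfuns.mult[of "g x" n "\<lambda>X. \<Prod>j\<in>F. g j X"] by simp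
qed

lemma polyfuns_minor:
  assumes "\<And>r. r < m \<Longrightarrow> rs r < n" "\<And>c. c < m \<Longrightarrow> cs c < n"
  shows "(\<lambda>X. det (mat m m (\<lambda>(r,c). X (rs r) (cs c)))) \<in> polyfuns n"
proof -
  have eq: "(\<lambda>X. det (mat m m (\<lambda>(r,c). X (rs r) (cs c)))) =
    (\<lambda>X. \<Sum>p\<in>{p. p permutes {0..<m}}. (\<lambda>X. signof p) X * (\<lambda>X. \<Prod>r\<in>{0..<m}. X (rs r) (cs (p r))) X)"
  proof
    fix X
    show "det (mat m m (\<lambda>(r,c). X (rs r) (cs c))) =
      (\<Sum>p\<in>{p. p permutes {0..<m}}. (\<lambda>X. signof p) X * (\<lambda>X. \<Prod>r\<in>{0..<m}. X (rs r) (cs (p r))) X)"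
      unfolding det_def'[OF mat_carrier]
      apply (rule sum.cong[OF refl])
      apply (rule arg_cong2[where f="(*)"], rule refl)
      apply (rule prod.cong[OF refl])
      apply (auto simp: permutes_in_image)
      done
  qed
  show ?thesis unfolding eq
    apply (rule polyfuns_sum)
     apply (simp add: finite_permutations)
    apply (rule polyfuns.mult)
     apply (rule polyfuns.const)
    apply (rule polyfuns_prod)
     apply simp
    apply (rule polyfuns.coord)
    using assms by (auto simp: permutes_in_image)
qed

lemma polyfuns_line:
  assumes "f \<in> polyfuns n"
  shows "\<exists>p. \<forall>t. f (\<lambda>a b. v a b + t * w a b) = poly p t"
  using assms
proof (induction rule: polyfuns.induct)
  case (const c)
  then show ?case by (intro exI[of _ "[:c:]"]) simp
next
  case (coord a b)
  then show ?case by (intro exI[of _ "[:v a b, w a b:]"]) (simp add: algebra_simps)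
next
  case (add f g)
  then obtain p q where "\<forall>t. f (\<lambda>a b. v a b + t * w a b) = poly p t"
    "\<forall>t. g (\<lambda>a b. v a b + t * w a b) = poly q t" by blast
  then show ?case by (intro exI[of _ "p + q"]) simp
next
  case (mult f g)
  then obtain p q where "\<forall>t. f (\<lambda>a b. v a b + t * w a b) = poly p t"
    "\<forall>t. g (\<lambda>a b. v a b + t * w a b) = poly q t" by blast
  then show ?case by (intro exI[of _ "p * q"]) simp
qed

lemma polyfuns_transl:
  assumes "f \<in> polyfuns n"
  shows "(\<lambda>X. f (\<lambda>a b. X a b + t * w a b)) \<in> polyfuns n"
  using assms
proof (induction rule: polyfuns.induct)
  case (const c)
  then show ?case by (rule polyfuns.const)
next
  case (coord a b)
  then show ?case using polyfuns.add[OF polyfuns.coord[of a n b] polyfuns.const[of "t * w a b"]] by simp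
next
  case (add f g)
  then show ?case using polyfuns.add by fastforce
next
  case (mult f g)
  then show ?case using polyfuns.mult by fastforce
qed



lemma key:
  fixes M0 :: "'k::alg_closed_field mat"
  assumes M0: "M0 \<in> carrier_mat (m+1) (m+1)" and e0: "M0 $$ (m,m) \<noteq> 0"
  shows "\<exists>t. det (mat (m+1) (m+1) (\<lambda>(r,c). M0 $$ (r,c) + (if r < m \<and> c = r then t else 0))) \<noteq> 0"
proof -
  define e where "e = M0 $$ (m,m)"
  define C' where "C' = mat m m (\<lambda>(r,c). M0 $$ (r,c) - M0 $$ (r,m) * M0 $$ (m,c) / e)"
  define cp where "cp = char_poly (- C')"
  have C': "C' \<in> carrier_mat m m" unfolding C'_def by simp
  have "degree cp = m \<and> coeff cp m = 1" unfolding cp_def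
    by (rule degree_monic_char_poly) (use C' in auto)
  hence "cp \<noteq> 0" by auto
  hence "finite {x. poly cp x = 0}" by (rule poly_roots_finite)
  then obtain t where t: "poly cp t \<noteq> 0"
    using infinite_alg_closed[where 'k='k] by (metis (mono_tags, lifting) UNIV_I ex_new_if_finite mem_Collect_eq)
  define K where "K = mat m m (\<lambda>(r,c). C' $$ (r,c) + (if r = c then t else 0))"
  have K: "K \<in> carrier_mat m m" unfolding K_def by simp
  have "poly cp t = det (- (char_matrix (- C') t))" unfolding cp_def
    by (rule char_poly_matrix) (use C' in auto)
  also have "- (char_matrix (- C') t) = K"
    unfolding K_def char_matrix_def by (rule eq_matI) (use C' in auto)
  finally have detK: "det K \<noteq> 0" using t by simp
  define L where "L = mat (m+1) (m+1) (\<lambda>(r,c). if r = c then 1 else if c = m \<and> r < m then M0 $$ (r,m) / e else 0)"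
  define U where "U = mat (m+1) (m+1) (\<lambda>(r,c). if r < m then (if c < m then K $$ (r,c) else 0) else M0 $$ (m,c))"
  define A3 where "A3 = mat 1 m (\<lambda>(_,c). M0 $$ (m,c))"
  define A4 where "A4 = mat 1 1 (\<lambda>_. e)"
  have "U = four_block_mat K (0\<^sub>m m 1) A3 A4"
    unfolding U_def A3_def A4_def e_def by (rule eq_matI) (use K in \<open>auto simp: less_Suc_eq\<close>)
  hence detU: "det U = det K * e"
    using det_four_block_mat_upper_right_zero_col[OF K refl, of A3 A4]
    unfolding A3_def A4_def by (simp add: det_single)
  have "upper_triangular L" unfolding L_def upper_triangular_def by auto
  hence detL: "det L = 1"
  proof -
    have "diag_mat L = replicate (m+1) 1"
      by (rule nth_equalityI) (simp_all add: diag_mat_def L_def del: upt_Suc replicate_Suc)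
    thus "det L = 1" using det_upper_triangular[of L "m+1"] \<open>upper_triangular L\<close> by (simp add: L_def)
  qed
  have "mat (m+1) (m+1) (\<lambda>(r,c). M0 $$ (r,c) + (if r < m \<and> c = r then t else 0)) = L * U"
  proof (rule eq_matI)
    fix r c assume r: "r < dim_row (L * U)" and c: "c < dim_col (L * U)"
    show "mat (m+1) (m+1) (\<lambda>(r,c). M0 $$ (r,c) + (if r < m \<and> c = r then t else 0)) $$ (r, c) = (L * U) $$ (r, c)"
    proof -
      have r': "r < m+1" and c': "c < m+1" using r c by (auto simp: L_def U_def)
      have "(L * U) $$ (r,c) = (\<Sum>k<m+1. L $$ (r,k) * U $$ (k,c))"
        using r' c' by (simp add: L_def U_def scalar_prod_def lessThan_atLeast0)
      also have "\<dots> = (\<Sum>k<m. L $$ (r,k) * U $$ (k,c)) + L $$ (r,m) * U $$ (m,c)"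
        by simp
      also have "(\<Sum>k<m. L $$ (r,k) * U $$ (k,c)) = (\<Sum>k<m. if k = r then U $$ (r,c) else 0)"
        by (rule sum.cong) (use r' in \<open>auto simp: L_def\<close>)
      also have "\<dots> = (if r < m then U $$ (r,c) else 0)" by simp
      finally have eq: "(L * U) $$ (r,c) = (if r < m then U $$ (r,c) else 0) + L $$ (r,m) * U $$ (m,c)" .
      show ?thesis unfolding eq using r' c' e0
        by (auto simp: L_def U_def K_def C'_def e_def less_Suc_eq field_simps)
    qed
  qed (auto simp: L_def U_def)
  hence "det (mat (m+1) (m+1) (\<lambda>(r,c). M0 $$ (r,c) + (if r < m \<and> c = r then t else 0))) = det K * e"
    using det_mult[of L "m+1" U] detL detU by (simp add: L_def U_def)
  thus ?thesis using detK e0 e_def by (intro exI[of _ t]) simp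
qed



lemma orbit_entry:
  fixes P Q :: "nat \<Rightarrow> nat \<Rightarrow> 'k::field"
  assumes "i \<le> n" "a < n" "b < n"
  shows "mmul n (mmul n P (e_mat n i)) Q a b = (\<Sum>j<i. P a j * Q (j + (n-i)) b)"
proof -
  have step1: "mmul n P (e_mat n i) a c = (if n - i \<le> c then P a (c - (n-i)) else 0)" if c: "c < n" for c
  proof -
    have "mmul n P (e_mat n i) a c = (\<Sum>d<n. P a d * e_mat n i d c)"
      using c assms by (simp add: mmul_def)
    also have "\<dots> = (\<Sum>d<n. if d = c - (n-i) then (if n - i \<le> c then P a d else 0) else 0)"
      by (rule sum.cong[OF refl]) (use c assms in \<open>auto simp: e_mat_def\<close>)
    also have "\<dots> = (if n - i \<le> c then P a (c - (n-i)) else 0)"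
      using c by (subst sum.delta) auto
    finally show ?thesis .
  qed
  have "mmul n (mmul n P (e_mat n i)) Q a b = (\<Sum>c<n. (if n - i \<le> c then P a (c - (n-i)) else 0) * Q c b)"
    unfolding mmul_def[of n "mmul n P (e_mat n i)" Q] using assms step1 by (auto intro!: sum.cong)
  also have "\<dots> = (\<Sum>c\<in>{0..<n-i}. (if n - i \<le> c then P a (c - (n-i)) else 0) * Q c b)
      + (\<Sum>c\<in>{n-i..<n}. (if n - i \<le> c then P a (c - (n-i)) else 0) * Q c b)"
    by (subst sum.atLeastLessThan_concat) (auto simp: lessThan_atLeast0)
  also have "(\<Sum>c\<in>{0..<n-i}. (if n - i \<le> c then P a (c - (n-i)) else 0) * Q c b) = 0"
    by (auto intro!: sum.neutral)
  also have "(\<Sum>c\<in>{n-i..<n}. (if n - i \<le> c then P a (c - (n-i)) else 0) * Q c b)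
      = (\<Sum>c\<in>{0+(n-i)..<i+(n-i)}. (if n - i \<le> c then P a (c - (n-i)) else 0) * Q c b)"
    using assms by simp
  also have "\<dots> = (\<Sum>j\<in>{0..<i}. P a j * Q (j + (n-i)) b)"
    by (subst sum.shift_bounds_nat_ivl) simp
  finally show ?thesis by (simp add: lessThan_atLeast0)
qed

lemma minor_orbit:
  fixes Y :: "nat \<Rightarrow> nat \<Rightarrow> 'k::field"
  assumes Y: "Y \<in> conj_orbit n (e_mat n i)" and i: "i \<le> n"
    and rs: "\<And>r. r < i+1 \<Longrightarrow> rs r < n" and cs: "\<And>c. c < i+1 \<Longrightarrow> cs c < n"
  shows "det (mat (i+1) (i+1) (\<lambda>(r,c). Y (rs r) (cs c))) = 0"
proof -
  obtain P Q where Yd: "Y = mmul n (mmul n P (e_mat n i)) Q"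
    using Y unfolding conj_orbit_def by blast
  define P' where "P' = mat (i+1) (i+1) (\<lambda>(r,j). if j < i then P (rs r) j else (0::'k))"
  define Q' where "Q' = mat (i+1) (i+1) (\<lambda>(j,c). Q (j + (n-i)) (cs c))"
  have "mat (i+1) (i+1) (\<lambda>(r,c). Y (rs r) (cs c)) = P' * Q'"
  proof (rule eq_matI)
    fix r c assume r: "r < dim_row (P' * Q')" and c: "c < dim_col (P' * Q')"
    hence r': "r < i+1" and c': "c < i+1" by (auto simp: P'_def Q'_def)
    have "(P' * Q') $$ (r,c) = (\<Sum>j<i+1. P' $$ (r,j) * Q' $$ (j,c))"
      using r' c' by (simp add: P'_def Q'_def scalar_prod_def lessThan_atLeast0)
    also have "\<dots> = (\<Sum>j<i. P (rs r) j * Q (j + (n-i)) (cs c))"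
      using r' c' by (simp add: P'_def Q'_def)
    finally show "mat (i+1) (i+1) (\<lambda>(r,c). Y (rs r) (cs c)) $$ (r,c) = (P' * Q') $$ (r,c)"
      using r' c' Yd orbit_entry[OF i rs[OF r'] cs[OF c']] by simp
  qed (auto simp: P'_def Q'_def)
  moreover have "det P' = 0"
  proof -
    have "(\<Prod>r = 0..<i+1. P' $$ (r, p r)) = 0" if p: "p permutes {0..<i+1}" for p
    proof -
      have "i \<in> p ` {0..<i+1}" using permutes_image[OF p] by simp
      then obtain r where r: "r \<in> {0..<i+1}" "p r = i" by auto
      show ?thesis
        by (rule prod_zero) (use r in \<open>auto simp: P'_def intro!: bexI[of _ r]\<close>)
    qed
    moreover have "P' \<in> carrier_mat (i+1) (i+1)" by (simp add: P'_def)
    ultimately show ?thesis unfolding det_def'[OF \<open>P' \<in> carrier_mat (i+1) (i+1)\<close>]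
      by (intro sum.neutral) (simp del: prod.op_ivl_Suc)
  qed
  ultimately show ?thesis using det_mult[of P' "i+1" Q'] by (simp add: P'_def Q'_def)
qed



lemma mmul_add_left:
  "mmul n (\<lambda>a b. X a b + t * Z a b) Y = (\<lambda>a b. mmul n X Y a b + t * mmul n Z Y a b)"
  by (auto simp: mmul_def distrib_right sum.distrib sum_distrib_left mult.assoc intro!: ext)

lemma mmul_add_right:
  "mmul n Y (\<lambda>a b. X a b + t * Z a b) = (\<lambda>a b. mmul n Y X a b + t * mmul n Y Z a b)"
  by (auto simp: mmul_def distrib_left sum.distrib sum_distrib_left mult.assoc mult.left_commute intro!: ext)

lemma e_mats: "i \<le> n \<Longrightarrow> e_mat n i \<in> mats n"
  by (auto simp: mats_def e_mat_def)

lemma ee_zero: "2 * i \<le> n \<Longrightarrow> mmul n (e_mat n i) (e_mat n i) = (\<lambda>a b. 0)"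
  by (auto simp: mmul_def e_mat_def intro!: ext sum.neutral)

lemma line_in_Y:
  fixes v :: "nat \<Rightarrow> nat \<Rightarrow> 'k::field"
  assumes char: "CHAR('k) = 2" and i: "2 * i \<le> n"
    and v: "v \<in> centralizer n (e_mat n i) \<inter> sqzero n"
  shows "(\<lambda>a b. v a b + t * e_mat n i a b) \<in> centralizer n (e_mat n i) \<inter> sqzero n"
proof -
  let ?e = "e_mat n i"
  have vm: "v \<in> mats n" and ve: "mmul n v ?e = mmul n ?e v" and vv: "mmul n v v = (\<lambda>a b. 0)"
    using v by (auto simp: centralizer_def sqzero_def)
  have em: "?e \<in> mats n" using e_mats[of i n] i by simp
  have ee: "mmul n ?e ?e = (\<lambda>a b. 0)" using ee_zero[OF i] .
  have two: "(2::'k) = 0" using of_nat_CHAR[where 'a='k] char by simp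
  have wm: "(\<lambda>a b. v a b + t * ?e a b) \<in> mats n" using vm em by (auto simp: mats_def)
  have c: "mmul n (\<lambda>a b. v a b + t * ?e a b) ?e = mmul n ?e (\<lambda>a b. v a b + t * ?e a b)"
    unfolding mmul_add_left mmul_add_right ee ve by simp
  have "mmul n (\<lambda>a b. v a b + t * ?e a b) (\<lambda>a b. v a b + t * ?e a b)
      = (\<lambda>a b. t * ((2::'k) * mmul n v ?e a b))"
    unfolding mmul_add_left mmul_add_right ee ve vv by (auto intro!: ext simp: algebra_simps)
  also have "\<dots> = (\<lambda>a b. 0)" using two by simp
  finally show ?thesis using wm c by (auto simp: centralizer_def sqzero_def)
qed

lemma line_irreducible:
  fixes V :: "(nat \<Rightarrow> nat \<Rightarrow> 'k::alg_closed_field) set"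
  assumes V: "zirreducible n V" and em: "E \<in> mats n"
  shows "zirreducible n {(\<lambda>a b. v a b + t * E a b) | v t. v \<in> V}" (is "zirreducible n ?W")
proof -
  have Vm: "V \<subseteq> mats n" and Vne: "V \<noteq> {}" using V by (auto simp: zirreducible_def)
  have Wm: "?W \<subseteq> mats n" using Vm em by (auto simp: mats_def)
  have Wne: "?W \<noteq> {}" using Vne by blast
  have split: "?W \<subseteq> C1 \<or> ?W \<subseteq> C2"
    if C1: "zclosed n C1" and C2: "zclosed n C2" and WC: "?W \<subseteq> C1 \<union> C2" for C1 C2
  proof -
    obtain F1 where F1: "F1 \<subseteq> polyfuns n" "C1 = {X \<in> mats n. \<forall>f\<in>F1. f X = 0}"
      using C1 unfolding zclosed_def by blast
    obtain F2 where F2: "F2 \<subseteq> polyfuns n" "C2 = {X \<in> mats n. \<forall>f\<in>F2. f X = 0}"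
      using C2 unfolding zclosed_def by blast
    define C' where "C' (F :: ((nat \<Rightarrow> nat \<Rightarrow> 'k) \<Rightarrow> 'k) set) t = {X \<in> mats n. \<forall>f\<in>F. f (\<lambda>a b. X a b + t * E a b) = 0}" for F t
    have C'cl: "zclosed n (C' F t)" if "F \<subseteq> polyfuns n" for F t
      unfolding zclosed_def
    proof (intro exI conjI)
      show "(\<lambda>f X. f (\<lambda>a b. X a b + t * E a b)) ` F \<subseteq> polyfuns n"
        using that polyfuns_transl by blast
      show "C' F t = {X \<in> mats n. \<forall>g\<in>(\<lambda>f X. f (\<lambda>a b. X a b + t * E a b)) ` F. g X = 0}"
        unfolding C'_def by auto
    qed
    have VC': "V \<subseteq> C' F1 t \<or> V \<subseteq> C' F2 t" for t
    proof -
      have "V \<subseteq> C' F1 t \<union> C' F2 t"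
      proof
        fix v assume v: "v \<in> V"
        hence "(\<lambda>a b. v a b + t * E a b) \<in> C1 \<union> C2" using WC by blast
        thus "v \<in> C' F1 t \<union> C' F2 t" using v Vm unfolding F1(2) F2(2) C'_def by auto
      qed
      thus ?thesis using V C'cl[OF F1(1)] C'cl[OF F2(1)] unfolding zirreducible_def by blast
    qed
    define T where "T F = {t. V \<subseteq> C' F t}" for F
    have fin: "T F = UNIV \<or> finite (T F)" if F: "F \<subseteq> polyfuns n" for F
    proof (cases "T F = UNIV")
      case False
      then obtain t1 where "t1 \<notin> T F" by auto
      then obtain v f where v: "v \<in> V" and f: "f \<in> F" and nz: "f (\<lambda>a b. v a b + t1 * E a b) \<noteq> 0"
        using Vm unfolding T_def C'_def by auto
      obtain p where p: "\<forall>t. f (\<lambda>a b. v a b + t * E a b) = poly p t"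
        using polyfuns_line[of f n v E] F f by blast
      have "p \<noteq> 0" using nz p by auto
      hence "finite {t. poly p t = 0}" by (rule poly_roots_finite)
      moreover have "T F \<subseteq> {t. poly p t = 0}"
      proof
        fix t assume "t \<in> T F"
        hence "v \<in> C' F t" using v unfolding T_def by auto
        hence "f (\<lambda>a b. v a b + t * E a b) = 0" using f unfolding C'_def by auto
        thus "t \<in> {t. poly p t = 0}" using p by simp
      qed
      ultimately show ?thesis by (metis finite_subset)
    qed simp
    have all: "W' \<subseteq> C" if hT: "T F = UNIV" and hC: "C = {X \<in> mats n. \<forall>f\<in>F. f X = 0}" and hW: "W' = ?W" for F C W'
    proof
      fix w assume "w \<in> W'"
      then obtain v t where w: "w = (\<lambda>a b. v a b + t * E a b)" "v \<in> V" using hW by blast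
      have "V \<subseteq> C' F t" using hT unfolding T_def by auto
      thus "w \<in> C" using w Wm hC hW unfolding C'_def by blast
    qed
    have "T F1 \<union> T F2 = UNIV" using VC' unfolding T_def by auto
    moreover have "infinite (UNIV :: 'k set)" by (rule infinite_alg_closed)
    ultimately have "T F1 = UNIV \<or> T F2 = UNIV" using fin[OF F1(1)] fin[OF F2(1)]
      by (metis finite_UnI)
    thus ?thesis using all[OF _ F1(2) refl] all[OF _ F2(2) refl] by blast
  qed
  show ?thesis unfolding zirreducible_def using Wm Wne split by blast
qed



theorem mainTheorem5:
  fixes n i :: nat
    and V :: "(nat \<Rightarrow> nat \<Rightarrow> 'k::alg_closed_field) set"
  assumes "CHAR('k) = 2"
    and "2 * i + 2 \<le> n"
    and "irr_component n (centralizer n (e_mat n i) \<inter> sqzero n) V"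
    and "\<exists>x\<in>V. E_block_nonzero n i x"
  shows "\<not> V \<subseteq> zclosure n (conj_orbit n (e_mat n i))"
proof
  assume sub: "V \<subseteq> zclosure n (conj_orbit n (e_mat n i))"
  let ?e = "e_mat n i :: nat \<Rightarrow> nat \<Rightarrow> 'k"
  let ?Y = "centralizer n ?e \<inter> sqzero n"
  let ?W = "{(\<lambda>a b. v a b + t * ?e a b) | v t. v \<in> V}"
  have i2: "2 * i \<le> n" and iln: "i \<le> n" using assms(2) by auto
  have VY: "V \<subseteq> ?Y" and Virr: "zirreducible n V"
    and Vmax: "\<And>W. V \<subseteq> W \<Longrightarrow> W \<subseteq> ?Y \<Longrightarrow> zirreducible n W \<Longrightarrow> W = V"
    using assms(3) unfolding irr_component_def by blast+
  have em: "?e \<in> mats n" using e_mats[OF iln] .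
  have "?W = V"
  proof (rule Vmax)
    show "V \<subseteq> ?W"
    proof
      fix v assume "v \<in> V"
      moreover have "v = (\<lambda>a b. v a b + 0 * ?e a b)" by simp
      ultimately show "v \<in> ?W" by blast
    qed
    show "?W \<subseteq> ?Y" using VY line_in_Y[OF assms(1) i2] by blast
    show "zirreducible n ?W" by (rule line_irreducible[OF Virr em])
  qed
  hence line: "\<And>v t. v \<in> V \<Longrightarrow> (\<lambda>a b. v a b + t * ?e a b) \<in> V" by blast
  obtain x a0 b0 where x: "x \<in> V" and a0: "i \<le> a0" "a0 < n - i" and b0: "i \<le> b0" "b0 < n - i"
    and xab: "x a0 b0 \<noteq> 0"
    using assms(4) unfolding E_block_nonzero_def by blast
  define rs where "rs r = (if r < i then r else a0)" for r
  define cs where "cs c = (if c < i then c + (n - i) else b0)" for c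
  have rsn: "rs r < n" if "r < i+1" for r using that a0 iln unfolding rs_def by auto
  have csn: "cs c < n" if "c < i+1" for c using that b0 iln unfolding cs_def by auto
  define f where "f X = det (mat (i+1) (i+1) (\<lambda>(r,c). X (rs r) (cs c)))" for X :: "nat \<Rightarrow> nat \<Rightarrow> 'k"
  have fp: "f \<in> polyfuns n" unfolding f_def[abs_def] by (rule polyfuns_minor) (use rsn csn in auto)
  define Z where "Z = {X \<in> mats n. \<forall>g\<in>{f}. g X = 0}"
  have Zcl: "zclosed n Z" unfolding zclosed_def Z_def using fp by blast
  have orbZ: "conj_orbit n ?e \<subseteq> Z"
  proof
    fix Y assume Y: "Y \<in> conj_orbit n ?e"
    then obtain P Q where "Y = mmul n (mmul n P ?e) Q" unfolding conj_orbit_def by blast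
    hence "Y \<in> mats n" by (auto simp: mats_def mmul_def)
    moreover have "f Y = 0" unfolding f_def using minor_orbit[OF Y iln, of rs cs] rsn csn by blast
    ultimately show "Y \<in> Z" unfolding Z_def by simp
  qed
  have clZ: "zclosure n (conj_orbit n ?e) \<subseteq> Z"
    unfolding zclosure_def using Zcl orbZ by blast
  define M0 where "M0 = mat (i+1) (i+1) (\<lambda>(r,c). x (rs r) (cs c))"
  have M0: "M0 \<in> carrier_mat (i+1) (i+1)" unfolding M0_def by simp
  have "M0 $$ (i,i) \<noteq> 0" unfolding M0_def rs_def cs_def using xab by simp
  then obtain t where t: "det (mat (i+1) (i+1) (\<lambda>(r,c). M0 $$ (r,c) + (if r < i \<and> c = r then t else 0))) \<noteq> 0"
    using key[OF M0] by blast
  have "mat (i+1) (i+1) (\<lambda>(r,c). M0 $$ (r,c) + (if r < i \<and> c = r then t else 0))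
      = mat (i+1) (i+1) (\<lambda>(r,c). (\<lambda>a b. x a b + t * ?e a b) (rs r) (cs c))"
    by (rule eq_matI) (use a0 b0 in \<open>auto simp: M0_def rs_def cs_def e_mat_def\<close>)
  hence "f (\<lambda>a b. x a b + t * ?e a b) \<noteq> 0" using t unfolding f_def by simp
  moreover have "(\<lambda>a b. x a b + t * ?e a b) \<in> Z" using line[OF x] sub clZ by blast
  ultimately show False unfolding Z_def by simp
qed


end
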